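(* Fix a slope bound $s\ge0$, and let $\alpha=(a_1,\dots,a_w)$. Let $a_i,a_j\in\mathbb{L}^{t+1}_\alpha$ with $i<j$, and suppose $a_k\in\mathbb{L}^t_\alpha$ is the leftmost slope-proper predecessor of $a_i$. Then every slope-proper predecessor of $a_j$ is either $a_k$ or lies to the right of $a_k$ in $\mathbb{L}^t_\alpha$. In particular, the leftmost slope-proper predecessor of $a_j$, if it exists, is $a_k$ or an item to the right of $a_k$.
   Context: Let $\alpha=(a_1,\dots,a_w)$ be a finite sequence of real numbers, with items identified by their positions. Increasing subsequences are non-strict. $a_j$ is compatible with $a_i$ if $j<i$ and $a_j\le a_i$. $RL_\alpha(a)$ is the maximum length of an increasing subsequence ending at $a$. $a_j$ is a predecessor of $a_i$ if it is compatible with $a_i$ and $RL_\alpha(a_j)=RL_\alpha(a_i)-1$. The horizontal list $\mathbb{L}^t_\alpha$ is the list of items of rising length $t$, ordered by position; "left of" means earlier position. Items are colored black or non-black recursively by level: all items of $\mathbb{L}^1_\alpha$ are non-black, and an item $a_i\in\mathbb{L}^{t+1}_\alpha$ is non-black iff it has a slope-proper predecessor. Here a slope-proper predecessor of $a_i$ is a non-black predecessor $a_k$ of $a_i$ with $(a_i-a_k)/(i-k)\ge s$. *)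

theory Defs
  imports Complex_Main
begin

(* Sequence alpha = (a_1,...,a_w) is represented by a list  a :: real list;
   item a_i is identified by its (0-based) position i < length a.
   Only differences of positions enter the definitions, so 0- vs 1-based
   indexing is immaterial. *)

definition compatible :: "real list \<Rightarrow> nat \<Rightarrow> nat \<Rightarrow> bool" where
  "compatible a j i \<longleftrightarrow> j < i \<and> i < length a \<and> a ! j \<le> a ! i"

definition inc_subseq_ending :: "real list \<Rightarrow> nat list \<Rightarrow> nat \<Rightarrow> bool" where
  "inc_subseq_ending a js i \<longleftrightarrow>
     js \<noteq> [] \<and> last js = i \<and> sorted_wrt (<) js \<and> (\<forall>p\<in>set js. p < length a) \<and>
     sorted_wrt (\<le>) (map (\<lambda>p. a ! p) js)"

definition RL :: "real list \<Rightarrow> nat \<Rightarrow> nat" where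
  "RL a i = Max {length js | js. inc_subseq_ending a js i}"

definition predecessor :: "real list \<Rightarrow> nat \<Rightarrow> nat \<Rightarrow> bool" where
  "predecessor a j i \<longleftrightarrow> compatible a j i \<and> RL a j = RL a i - 1"

(* horizontal list L^t_alpha (as a set of positions, ordered by position) *)
definition hlist :: "real list \<Rightarrow> nat \<Rightarrow> nat set" where
  "hlist a t = {i. i < length a \<and> RL a i = t}"

(* non-black items, defined level by level (well-founded: predecessors lie
   at strictly smaller positions and levels) *)
inductive nonblack :: "real \<Rightarrow> real list \<Rightarrow> nat \<Rightarrow> bool" for s a where
  level1: "i < length a \<Longrightarrow> RL a i = 1 \<Longrightarrow> nonblack s a i"
| step: "RL a i \<ge> 2 \<Longrightarrow> predecessor a k i \<Longrightarrow> nonblack s a k \<Longrightarrow>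
         (a ! i - a ! k) / (real i - real k) \<ge> s \<Longrightarrow> nonblack s a i"

definition slope_proper_pred :: "real \<Rightarrow> real list \<Rightarrow> nat \<Rightarrow> nat \<Rightarrow> bool" where
  "slope_proper_pred s a k i \<longleftrightarrow>
     predecessor a k i \<and> nonblack s a k \<and> (a ! i - a ! k) / (real i - real k) \<ge> s"

end

theory Submission
  imports Defs
begin

lemma last_ge:
  assumes "sorted_wrt R xs" "xs \<noteq> []" "x \<in> set xs" "reflp R"
  shows "x = last xs \<or> R x (last xs)"
proof -
  obtain ys y where xs: "xs = ys @ [y]" using assms(2) by (cases xs rule: rev_exhaust) auto
  show ?thesis using assms(1,3) unfolding xs by (auto simp: sorted_wrt_append)
qed

lemma RL_attained:
  assumes "p < length a"
  shows "\<exists>js. inc_subseq_ending a js p \<and> length js = RL a p"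
proof -
  let ?S = "{length js | js. inc_subseq_ending a js p}"
  have "?S \<subseteq> {..length a}"
  proof
    fix n assume "n \<in> ?S"
    then obtain js where js: "inc_subseq_ending a js p" "n = length js" by blast
    have "distinct js" using js(1) unfolding inc_subseq_ending_def
      using strict_sorted_iff by blast
    moreover have "set js \<subseteq> {..<length a}" using js(1) unfolding inc_subseq_ending_def by auto
    ultimately have "length js \<le> length a"
      by (metis card_lessThan card_mono distinct_card finite_lessThan)
    then show "n \<in> {..length a}" using js by simp
  qed
  then have fin: "finite ?S" using finite_subset by blast
  have "inc_subseq_ending a [p] p" using assms unfolding inc_subseq_ending_def by simp
  then have ne: "?S \<noteq> {}" by blast
  have "RL a p \<in> ?S" unfolding RL_def using Max_in[OF fin ne] .
  then obtain js where "RL a p = length js" "inc_subseq_ending a js p" by blast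
  then show ?thesis by metis
qed

lemma RL_ge:
  assumes "inc_subseq_ending a js p"
  shows "length js \<le> RL a p"
proof -
  let ?S = "{length js | js. inc_subseq_ending a js p}"
  have "?S \<subseteq> {..length a}"
  proof
    fix n assume "n \<in> ?S"
    then obtain js where js: "inc_subseq_ending a js p" "n = length js" by blast
    have "distinct js" using js(1) unfolding inc_subseq_ending_def
      using strict_sorted_iff by blast
    moreover have "set js \<subseteq> {..<length a}" using js(1) unfolding inc_subseq_ending_def by auto
    ultimately have "length js \<le> length a"
      by (metis card_lessThan card_mono distinct_card finite_lessThan)
    then show "n \<in> {..length a}" using js by simp
  qed
  then have fin: "finite ?S" using finite_subset by blast
  show ?thesis unfolding RL_def using assms fin by (intro Max_ge) auto
qed

lemma RL_mono:
  assumes "p < q" "q < length a" "a ! p \<le> a ! q"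
  shows "RL a p < RL a q"
proof -
  obtain js where js: "inc_subseq_ending a js p" "length js = RL a p"
    using RL_attained[of p a] assms by (meson less_trans)
  have ne: "js \<noteq> []" and l: "last js = p" and s1: "sorted_wrt (<) js"
    and bd: "\<forall>x\<in>set js. x < length a" and s2: "sorted_wrt (\<le>) (map (\<lambda>p. a ! p) js)"
    using js(1) unfolding inc_subseq_ending_def by auto
  have A: "\<forall>x\<in>set js. x < q"
  proof
    fix x assume x: "x \<in> set js"
    have "sorted_wrt (\<le>) js" using s1 by (rule sorted_wrt_mono_rel[rotated]) auto
    then have "x \<le> last js" using last_ge[OF _ ne x, of "(\<le>)"] by (auto simp: reflp_def)
    then show "x < q" using l assms by simp
  qed
  have B: "\<forall>y\<in>set (map (\<lambda>p. a ! p) js). y \<le> a ! q"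
  proof
    fix y assume y: "y \<in> set (map (\<lambda>p. a ! p) js)"
    have "map (\<lambda>p. a ! p) js \<noteq> []" using ne by simp
    then have "y \<le> last (map (\<lambda>p. a ! p) js)" using last_ge[OF s2 _ y, of] by (auto simp: reflp_def)
    also have "\<dots> = a ! p" using ne l by (simp add: last_map)
    finally show "y \<le> a ! q" using assms by simp
  qed
  have "inc_subseq_ending a (js @ [q]) q"
    unfolding inc_subseq_ending_def using A B s1 s2 bd assms
    by (auto simp: sorted_wrt_append)
  then have "length (js @ [q]) \<le> RL a q" by (rule RL_ge)
  then show ?thesis using js by simp
qed

theorem mainTheorem12:
  fixes s :: real and a :: "real list" and t i j k :: nat
  assumes "s \<ge> 0"
    and "i \<in> hlist a (t + 1)" and "j \<in> hlist a (t + 1)" and "i < j"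
    and "k \<in> hlist a t"
    and "slope_proper_pred s a k i"
    and "\<forall>k'. slope_proper_pred s a k' i \<longrightarrow> k \<le> k'"
  shows "(\<forall>k'. slope_proper_pred s a k' j \<longrightarrow> k' = k \<or> k < k')
       \<and> ((\<exists>k'. slope_proper_pred s a k' j) \<longrightarrow> k \<le> (LEAST k'. slope_proper_pred s a k' j))"
proof -
  have I: "i < length a" "RL a i = t + 1" using assms(2) by (auto simp: hlist_def)
  have J: "j < length a" "RL a j = t + 1" using assms(3) by (auto simp: hlist_def)
  have K: "k < length a" "RL a k = t" using assms(5) by (auto simp: hlist_def)
  have ki: "k < i" using assms(6) by (simp add: slope_proper_pred_def predecessor_def compatible_def)
  have aij: "a ! j < a ! i"
  proof (rule ccontr)
    assume "\<not> a ! j < a ! i"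
    then have "RL a i < RL a j" using RL_mono[OF assms(4) J(1)] by simp
    then show False using I J by simp
  qed
  have P1: "\<forall>k'. slope_proper_pred s a k' j \<longrightarrow> k' = k \<or> k < k'"
  proof (intro allI impI)
    fix k' assume sp: "slope_proper_pred s a k' j"
    show "k' = k \<or> k < k'"
    proof (rule ccontr)
      assume "\<not> (k' = k \<or> k < k')"
      then have kk: "k' < k" by simp
      have c: "k' < j" "a ! k' \<le> a ! j" and rl: "RL a k' = t" and nb: "nonblack s a k'"
        and sl: "(a ! j - a ! k') / (real j - real k') \<ge> s"
        using sp J unfolding slope_proper_pred_def predecessor_def compatible_def by simp_all
      have "a ! k' \<le> a ! i" using c aij by simp
      have comp: "compatible a k' i" using kk ki I c aij by (simp add: compatible_def)
      have pr: "predecessor a k' i" using comp rl I by (simp add: predecessor_def)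
      have d1: "real j - real k' > 0" "real i - real k' > 0" using kk ki assms(4) by auto
      have num: "a ! j - a ! k' \<ge> 0" using c by simp
      have "(a ! j - a ! k') / (real j - real k') \<le> (a ! i - a ! k') / (real j - real k')"
        using aij d1 by (simp add: divide_right_mono)
      also have "\<dots> \<le> (a ! i - a ! k') / (real i - real k')"
      proof (rule divide_left_mono)
        show "real i - real k' \<le> real j - real k'" using assms(4) by simp
        show "0 \<le> a ! i - a ! k'" using num aij by simp
        show "0 < (real j - real k') * (real i - real k')" using d1 by (rule mult_pos_pos)
      qed
      finally have "(a ! i - a ! k') / (real i - real k') \<ge> s" using sl by simp
      then have "slope_proper_pred s a k' i" using pr nb by (simp add: slope_proper_pred_def)
      then have "k \<le> k'" using assms(7) by blast
      then show False using kk by simp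
    qed
  qed
  have P2: "(\<exists>k'. slope_proper_pred s a k' j) \<longrightarrow> k \<le> (LEAST k'. slope_proper_pred s a k' j)"
  proof
    assume "\<exists>k'. slope_proper_pred s a k' j"
    then have "slope_proper_pred s a (LEAST k'. slope_proper_pred s a k' j) j" by (rule LeastI_ex)
    then show "k \<le> (LEAST k'. slope_proper_pred s a k' j)" using P1 by (metis le_less)
  qed
  show ?thesis using P1 P2 by blast
qed

end
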